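(* Let $F$ be a $2$-edge-coloured graph on $n\ge 2$ vertices which contains no alternating cycle. Then there is an ordering $v_1,\dots,v_n$ of $V(F)$ such that for every $1\le i\le n$ there is a colour $c_i\in\{\text{red},\text{blue}\}$ for which $v_i$ has fewer than $\log_2 n$ neighbours $v_j$ with $j>i$ such that the edge $\{v_i,v_j\}$ has colour $c_i$.
   Context: A $2$-edge-coloured graph is a finite simple graph each of whose edges is coloured red or blue. An alternating cycle is a cycle whose consecutive edges have alternating colours. *)

theory Defs
  imports Complex_Main
begin

datatype colour = Red | Blue

text \<open>A 2-edge-coloured finite simple graph on vertex set V: col u v = Some c iff
  {u,v} is an edge of colour c; None means no edge.\<close>
definition two_edge_coloured_graph :: "'a set \<Rightarrow> ('a \<Rightarrow> 'a \<Rightarrow> colour option) \<Rightarrow> bool" where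
  "two_edge_coloured_graph V col \<longleftrightarrow> finite V \<and>
     (\<forall>u v. col u v = col v u) \<and> (\<forall>v. col v v = None) \<and>
     (\<forall>u v. col u v \<noteq> None \<longrightarrow> u \<in> V \<and> v \<in> V)"

definition alternating_cycle :: "('a \<Rightarrow> 'a \<Rightarrow> colour option) \<Rightarrow> 'a list \<Rightarrow> bool" where
  "alternating_cycle col cs \<longleftrightarrow> (let k = length cs in
     k \<ge> 3 \<and> distinct cs \<and>
     (\<forall>i<k. col (cs!i) (cs!((i+1) mod k)) \<noteq> None) \<and>
     (\<forall>i<k. col (cs!i) (cs!((i+1) mod k)) \<noteq> col (cs!((i+1) mod k)) (cs!((i+2) mod k))))"

end

theory Submission
  imports Defs
begin


definition pmg :: "'b set \<Rightarrow> ('b \<Rightarrow> 'b \<Rightarrow> bool) \<Rightarrow> ('b \<Rightarrow> 'b) \<Rightarrow> bool" where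
 "pmg V E mt \<longleftrightarrow> finite V \<and> (\<forall>x y. E x y \<longrightarrow> x \<in> V \<and> y \<in> V \<and> E y x \<and> x \<noteq> y) \<and>
    (\<forall>x\<in>V. mt x \<in> V \<and> mt x \<noteq> x \<and> mt (mt x) = x \<and> E x (mt x))"

definition altp :: "'b set \<Rightarrow> ('b \<Rightarrow> 'b \<Rightarrow> bool) \<Rightarrow> ('b \<Rightarrow> 'b) \<Rightarrow> 'b list \<Rightarrow> bool" where
 "altp V E mt xs \<longleftrightarrow> set xs \<subseteq> V \<and> distinct (xs @ map mt xs) \<and> successively (\<lambda>x y. E (mt x) y) xs"

definition altc :: "'b set \<Rightarrow> ('b \<Rightarrow> 'b \<Rightarrow> bool) \<Rightarrow> ('b \<Rightarrow> 'b) \<Rightarrow> 'b list \<Rightarrow> bool" where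
 "altc V E mt xs \<longleftrightarrow> length xs \<ge> 2 \<and> altp V E mt xs \<and> E (mt (last xs)) (hd xs)"

lemma pmgD:
  assumes "pmg V E mt"
  shows "finite V" "E x y \<Longrightarrow> x \<in> V" "E x y \<Longrightarrow> y \<in> V" "E x y \<Longrightarrow> E y x" "E x y \<Longrightarrow> x \<noteq> y"
    "x \<in> V \<Longrightarrow> mt x \<in> V" "x \<in> V \<Longrightarrow> mt x \<noteq> x" "x \<in> V \<Longrightarrow> mt (mt x) = x" "x \<in> V \<Longrightarrow> E x (mt x)"
  using assms unfolding pmg_def by blast+

lemma altp_rev:
  assumes "pmg V E mt" "altp V E mt xs"
  shows "altp V E mt (map mt (rev xs))"
proof -
  have mm: "map mt (map mt xs) = xs" using assms pmgD(8)[OF assms(1)] unfolding altp_def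
    by (auto intro!: map_idI)
  have "set (map mt (rev xs)) \<subseteq> V" using assms pmgD(6)[OF assms(1)] unfolding altp_def by auto
  moreover have "distinct (map mt (rev xs) @ map mt (map mt (rev xs)))"
  proof -
    have e: "map mt (map mt (rev xs)) = rev xs" by (metis mm rev_map)
    show ?thesis unfolding e using assms(2) unfolding altp_def by (auto simp: rev_map[symmetric])
  qed
  moreover have "successively (\<lambda>x y. E (mt x) y) (map mt (rev xs))"
    unfolding successively_map successively_rev
    using assms(2) unfolding altp_def
    by (rule_tac successively_mono[where P="\<lambda>x y. E (mt x) y"]) (use assms pmgD[OF assms(1)] in auto)
  ultimately show ?thesis unfolding altp_def by blast
qed

lemma altc_rev:
  assumes "pmg V E mt" "altc V E mt xs"
  shows "altc V E mt (map mt (rev xs))"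
proof -
  have ne: "xs \<noteq> []" using assms(2) unfolding altc_def by auto
  have "hd xs \<in> V" using ne assms(2) unfolding altc_def altp_def by auto
  then show ?thesis using assms altp_rev[OF assms(1)] ne pmgD[OF assms(1)] unfolding altc_def
    by (auto simp: last_map hd_map last_rev hd_rev)
qed

lemma altc_rot1:
  assumes "altc V E mt (x # xs)"
  shows "altc V E mt (xs @ [x])"
  using assms unfolding altc_def altp_def
  by (cases xs) (auto simp: successively_append_iff successively_Cons hd_append split: if_splits)

lemma altc_rot:
  assumes "altc V E mt (ys @ zs)"
  shows "altc V E mt (zs @ ys)"
  using assms
proof (induct ys arbitrary: zs)
  case Nil then show ?case by simp
next
  case (Cons y ys)
  have "altc V E mt ((ys @ zs) @ [y])" using altc_rot1 Cons.prems by fastforce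
  then have "altc V E mt ((zs @ [y]) @ ys)" using Cons.hyps[of "zs @ [y]"] by simp
  then show ?case by simp
qed

lemma altp_append_iff:
  "altp V E mt (xs @ ys) \<longleftrightarrow> altp V E mt xs \<and> altp V E mt ys \<and>
     (set xs \<union> mt ` set xs) \<inter> (set ys \<union> mt ` set ys) = {} \<and> (xs = [] \<or> ys = [] \<or> E (mt (last xs)) (hd ys))"
  unfolding altp_def by (auto simp: successively_append_iff)

lemma altp_take: "altp V E mt xs \<Longrightarrow> altp V E mt (take n xs)"
  using altp_append_iff[of V E mt "take n xs" "drop n xs"] by simp

lemma altp_drop: "altp V E mt xs \<Longrightarrow> altp V E mt (drop n xs)"
  using altp_append_iff[of V E mt "take n xs" "drop n xs"] by simp

lemma altp_edge: "altp V E mt xs \<Longrightarrow> Suc i < length xs \<Longrightarrow> E (mt (xs!i)) (xs ! Suc i)"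
  unfolding altp_def using successively_nth by fastforce

lemma altp_set: "altp V E mt xs \<Longrightarrow> set xs \<subseteq> V"
  unfolding altp_def by auto

lemma altp_nth_inj: "altp V E mt xs \<Longrightarrow> i < length xs \<Longrightarrow> j < length xs \<Longrightarrow> xs!i = xs!j \<Longrightarrow> i = j"
  unfolding altp_def by (simp add: nth_eq_iff_index_eq)

lemma altp_nth_mt: "altp V E mt xs \<Longrightarrow> i < length xs \<Longrightarrow> j < length xs \<Longrightarrow> xs!i \<noteq> mt (xs!j)"
  unfolding altp_def by (auto dest!: nth_mem)

lemma altp_mt_inj: "altp V E mt xs \<Longrightarrow> i < length xs \<Longrightarrow> j < length xs \<Longrightarrow> mt (xs!i) = mt (xs!j) \<Longrightarrow> i = j"
  unfolding altp_def by (metis distinct_append length_map nth_eq_iff_index_eq nth_map)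




definition brg :: "('b \<Rightarrow> 'b \<Rightarrow> bool) \<Rightarrow> ('b \<Rightarrow> 'b) \<Rightarrow> 'b \<Rightarrow> 'b \<Rightarrow> 'b \<Rightarrow> bool" where
  "brg E mt u x y \<longleftrightarrow> E x y \<and> {x, y} \<noteq> {u, mt u}"

locale blossom =
  fixes V :: "'b set" and E mt p t
  assumes pm: "pmg V E mt" and ap: "altp V E mt p" and nac: "\<not>(\<exists>cs. altc V E mt cs)"
    and t0: "0 < t" and tl: "t < length p" and e0: "E (p!0) (p!t)"
begin

definition "b = p!t"
definition "T = take t p"
definition "D = set T \<union> mt ` set T"
definition "rho x = (if x \<in> D then b else x)"
definition "V' = V - D"
definition "E' x y = (x \<in> V' \<and> y \<in> V' \<and> x \<noteq> y \<and> (\<exists>x0 y0. E x0 y0 \<and> rho x0 = x \<and> rho y0 = y))"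

lemma pV: "set p \<subseteq> V" using altp_set[OF ap] .
lemma bV: "b \<in> V" unfolding b_def using pV tl by (meson nth_mem subsetD)

lemma p_split: "p = T @ drop t p" unfolding T_def by simp
lemma b_in_drop: "b \<in> set (drop t p)" unfolding b_def using Cons_nth_drop_Suc[OF tl] by (metis list.set_intros(1))

lemma D_disj: "D \<inter> (set (drop t p) \<union> mt ` set (drop t p)) = {}"
  using altp_append_iff[of V E mt T "drop t p"] ap p_split unfolding D_def by auto

lemma bD: "b \<notin> D" "mt b \<notin> D" using D_disj b_in_drop by auto

lemma DV: "D \<subseteq> V"
  using pV pmgD(6)[OF pm] unfolding D_def T_def by (auto dest: in_set_takeD)

lemma TV: "set T \<subseteq> V" using pV unfolding T_def by (meson in_set_takeD subsetD subsetI)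

lemma Dmt: "x \<in> D \<Longrightarrow> mt x \<in> D"
  using TV pmgD(8)[OF pm] unfolding D_def by (auto simp: subset_iff)

lemma p0D: "p!0 \<in> D"
proof -
  have "take t p ! 0 \<in> set (take t p)" using t0 tl by (intro nth_mem) simp
  moreover have "take t p ! 0 = p!0" using t0 by simp
  ultimately show ?thesis unfolding D_def T_def by simp
qed

lemma D_cases: assumes "x \<in> D"
  obtains s where "s < t" "x = p!s" | s where "s < t" "x = mt (p!s)"
  using assms tl unfolding D_def T_def by (auto simp: in_set_conv_nth)

lemma take_sub: "s < t \<Longrightarrow> set (take (Suc s) p) \<subseteq> set T"
  unfolding T_def by (rule set_take_subset_set_take) simp

lemma take_subD: "s < t \<Longrightarrow> set (take (Suc s) p) \<subseteq> D \<and> mt ` set (take (Suc s) p) \<subseteq> D"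
  using take_sub unfolding D_def by blast

lemma last_take_Suc: "s < length p \<Longrightarrow> last (take (Suc s) p) = p!s"
  by (simp add: take_Suc_conv_app_nth)

lemma hd_take_Suc: "s < length p \<Longrightarrow> hd (take (Suc s) p) = p!0"
  by (cases p) auto

lemma noD: assumes "x \<in> D" shows "\<not> E x (mt b)"
proof
  assume ex: "E x (mt b)"
  from assms show False
  proof (cases rule: D_cases)
    case (1 s)
    let ?L = "drop s (take (Suc t) p)"
    have "altc V E mt ?L"
    proof -
      have l: "length ?L = Suc t - s" using tl by simp
      have h: "hd ?L = p!s" using 1 tl by (simp add: hd_drop_conv_nth)
      have la: "last ?L = p!t" using 1 tl by (simp add: last_drop take_Suc_conv_app_nth)
      show ?thesis unfolding altc_def using l h la 1 ex pmgD(4)[OF pm] altp_drop[OF altp_take[OF ap]] b_def by auto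
    qed
    then show False using nac by blast
  next
    case (2 s)
    let ?L = "take (Suc s) p @ [mt b]"
    have bm: "mt b \<in> V" "mt (mt b) = b" "mt b \<noteq> b" using bV pmgD[OF pm] by auto
    have a1: "altp V E mt [mt b]" unfolding altp_def using bm by auto
    have "altp V E mt ?L" unfolding altp_append_iff
      using altp_take[OF ap] a1 take_subD[OF 2(1)] bD bm 2 ex last_take_Suc tl by auto
    moreover have "E (mt (last ?L)) (hd ?L)" using bm e0 pmgD(4)[OF pm] b_def tl
      by (cases p) (auto simp: hd_append)
    ultimately have "altc V E mt ?L" unfolding altc_def using tl by simp
    then show False using nac by blast
  qed
qed

lemma V'_mt: "x \<in> V' \<Longrightarrow> mt x \<in> V'"
  unfolding V'_def using pmgD[OF pm] Dmt by (metis Diff_iff)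

lemma rho_V': "x \<in> V' \<Longrightarrow> rho x = x" unfolding rho_def V'_def by simp

lemma bV': "b \<in> V'" "mt b \<in> V'" unfolding V'_def using bV bD pmgD(6)[OF pm] by auto

lemma rho_in: "x \<in> V \<Longrightarrow> rho x \<in> V'" unfolding rho_def V'_def using bV bD by auto

lemma pm': "pmg V' E' mt"
proof -
  have "finite V'" unfolding V'_def using pmgD(1)[OF pm] by simp
  moreover have "\<forall>x y. E' x y \<longrightarrow> x \<in> V' \<and> y \<in> V' \<and> E' y x \<and> x \<noteq> y"
    unfolding E'_def using pmgD(4)[OF pm] by blast
  moreover have "\<forall>x\<in>V'. mt x \<in> V' \<and> mt x \<noteq> x \<and> mt (mt x) = x \<and> E' x (mt x)"
  proof
    fix x assume x: "x \<in> V'"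
    then have xV: "x \<in> V" unfolding V'_def by simp
    have ne: "x \<noteq> mt x" "E x (mt x)" using pmgD[OF pm] xV by metis+
    have "E' x (mt x)" unfolding E'_def using x V'_mt[OF x] rho_V'[OF x] rho_V'[OF V'_mt[OF x]] ne
      by blast
    then show "mt x \<in> V' \<and> mt x \<noteq> x \<and> mt (mt x) = x \<and> E' x (mt x)"
      using V'_mt[OF x] pmgD[OF pm] xV by auto
  qed
  ultimately show ?thesis unfolding pmg_def by blast
qed

lemma card_less: "card V' < card V"
proof -
  have "V' \<subset> V" unfolding V'_def using p0D DV by blast
  then show ?thesis using pmgD(1)[OF pm] by (simp add: psubset_card_mono)
qed

lemma E'_E: "E' x y \<Longrightarrow> x \<noteq> b \<Longrightarrow> y \<noteq> b \<Longrightarrow> E x y"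
  unfolding E'_def rho_def by (metis (full_types))

lemma Q_ex: assumes "y0 \<in> D"
  shows "\<exists>Q. altp V E mt Q \<and> Q \<noteq> [] \<and> set Q \<subseteq> D \<and> mt ` set Q \<subseteq> D \<and> hd Q = y0 \<and> E (mt (last Q)) b"
  using assms
proof (cases rule: D_cases)
  case (1 s)
  let ?Q = "drop s T"
  have lT: "length T = t" using tl unfolding T_def by simp
  have a: "altp V E mt ?Q" unfolding T_def by (rule altp_drop[OF altp_take[OF ap]])
  have b: "?Q \<noteq> []" using 1 lT by simp
  have "set ?Q \<subseteq> set T" by (rule set_drop_subset)
  then have c: "set ?Q \<subseteq> D \<and> mt ` set ?Q \<subseteq> D" unfolding D_def by blast
  have "hd ?Q = T!s" using 1 lT by (simp add: hd_drop_conv_nth)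
  also have "T!s = p!s" unfolding T_def using 1 by simp
  finally have d: "hd ?Q = y0" using 1 by simp
  have "last ?Q = last T" using 1 lT by (simp add: last_drop)
  also have "\<dots> = T!(t-1)" using lT t0 by (metis last_conv_nth length_greater_0_conv)
  also have "\<dots> = p!(t-1)" unfolding T_def using t0 by simp
  finally have l: "last ?Q = p!(t-1)" .
  have "Suc (t-1) = t" using t0 by simp
  then have "E (mt (p!(t-1))) b" using altp_edge[OF ap, of "t - 1"] tl unfolding b_def by simp
  then have e: "E (mt (last ?Q)) b" using l by simp
  show ?thesis apply (rule exI[where x="?Q"]) using a b c d e by simp
next
  case (2 s)
  let ?R = "take (Suc s) p"
  let ?Q = "map mt (rev ?R)"
  have R: "altp V E mt ?R" using altp_take[OF ap] .
  have "altp V E mt ?Q" using altp_rev[OF pm R] .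
  moreover have "?Q \<noteq> []" using tl by (cases p) auto
  moreover have RV: "set ?R \<subseteq> V" using altp_set[OF R] .
  have "mt ` mt ` set ?R = set ?R" using RV pmgD(8)[OF pm] by (force simp: image_iff)
  then have "set ?Q \<subseteq> D \<and> mt ` set ?Q \<subseteq> D" using take_subD[OF 2(1)] by simp
  moreover have "hd ?Q = y0"
  proof -
    have "rev ?R = p!s # rev (take s p)" using 2 tl by (simp add: take_Suc_conv_app_nth)
    then show ?thesis using 2 by simp
  qed
  moreover have "E (mt (last ?Q)) b"
  proof -
    have ne: "?R \<noteq> []" using tl by (cases p) auto
    have "last ?Q = mt (last (rev ?R))" using ne by (simp add: last_map)
    also have "\<dots> = mt (hd ?R)" using ne by (simp add: last_rev)
    also have "\<dots> = mt (p!0)" using tl hd_take_Suc by simp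
    finally have "last ?Q = mt (p!0)" .
    moreover have "p!0 \<in> V" using pV tl by (metis gr_zeroI not_less0 nth_mem subsetD)
    ultimately show ?thesis using e0 b_def pmgD(8)[OF pm] by simp
  qed
  ultimately show ?thesis apply - apply (rule exI[where x="?Q"]) by simp
qed

lemma D_V'_disj: "D \<inter> V' = {}" unfolding V'_def by auto

lemma lift_altc_b:
  assumes ac: "altc V' E' mt cs" and bin: "b \<in> set cs"
  shows False
proof -
  obtain ys zs where cs: "cs = ys @ b # zs" using split_list[OF bin] by blast
  let ?rs = "zs @ ys"
  let ?c = "b # ?rs"
  have ac1: "altc V' E' mt ?c" using altc_rot[of V' E' mt ys "b # zs"] ac cs by simp
  have dist: "distinct (?c @ map mt ?c)" using ac1 unfolding altc_def altp_def by simp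
  then have bnr: "b \<notin> set ?rs" and bnm: "b \<notin> mt ` set ?c" by auto
  have rsne: "?rs \<noteq> []" using ac1 unfolding altc_def by auto
  have cV': "set ?c \<subseteq> V'" using ac1 unfolding altc_def altp_def by simp
  have cV: "set ?c \<subseteq> V" using cV' unfolding V'_def by auto
  have sc: "successively (\<lambda>x y. E' (mt x) y) ?c" using ac1 unfolding altc_def altp_def by simp
  have s1: "E (mt b) (hd ?rs)"
  proof -
    have "E' (mt b) (hd ?rs)" using sc rsne unfolding successively_Cons by auto
    moreover have "mt b \<noteq> b" using pmgD(7)[OF pm] bV by simp
    moreover have "hd ?rs \<noteq> b" using bnr rsne by (metis hd_in_set)
    ultimately show ?thesis using E'_E by blast
  qed
  have s2: "successively (\<lambda>x y. E (mt x) y) ?rs"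
  proof (rule successively_mono)
    show "successively (\<lambda>x y. E' (mt x) y) ?rs" using sc rsne unfolding successively_Cons by auto
    fix x y assume "x \<in> set ?rs" "y \<in> set ?rs" "E' (mt x) y"
    moreover have "mt x \<noteq> b" using bnm \<open>x \<in> set ?rs\<close> by (metis image_eqI list.set_intros(2))
    moreover have "y \<noteq> b" using bnr \<open>y \<in> set ?rs\<close> by auto
    ultimately show "E (mt x) y" using E'_E by blast
  qed
  have apc: "altp V E mt ?c" unfolding altp_def using cV dist s1 s2 rsne
    by (simp add: successively_Cons)
  have lc: "last ?c = last ?rs" using rsne by (metis last_ConsR)
  have cl: "E' (mt (last ?rs)) b" using ac1 lc unfolding altc_def by simp
  then obtain x0 y0 where xy: "E x0 y0" "rho x0 = mt (last ?rs)" "rho y0 = b" unfolding E'_def by blast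
  have lrin: "last ?rs \<in> set ?c" using rsne by (metis last_in_set list.set_intros(2))
  have "x0 \<notin> D"
  proof
    assume "x0 \<in> D"
    then have "b = mt (last ?rs)" using xy unfolding rho_def by simp
    then show False using bnm lrin by auto
  qed
  then have x0: "x0 = mt (last ?rs)" using xy unfolding rho_def by simp
  show False
  proof (cases "y0 \<in> D")
    case False
    then have "y0 = b" using xy unfolding rho_def by simp
    then have "altc V E mt ?c" unfolding altc_def using apc xy x0 lc ac1 unfolding altc_def by simp
    then show False using nac by blast
  next
    case True
    from Q_ex[OF True] obtain Q where Q: "altp V E mt Q" "Q \<noteq> []" "set Q \<subseteq> D" "mt ` set Q \<subseteq> D"
      "hd Q = y0" "E (mt (last Q)) b" by blast
    have mc: "mt ` set ?c \<subseteq> V'" using cV' V'_mt by auto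
    have disj: "(set Q \<union> mt ` set Q) \<inter> (set ?c \<union> mt ` set ?c) = {}"
      using Q(3,4) cV' mc D_V'_disj by blast
    have "altp V E mt (Q @ ?c)" unfolding altp_append_iff using Q apc disj by simp
    moreover have "length (Q @ ?c) \<ge> 2" using ac1 unfolding altc_def by simp
    moreover have "E (mt (last (Q @ ?c))) (hd (Q @ ?c))" using Q(2,5) xy x0 lc by simp
    ultimately have "altc V E mt (Q @ ?c)" unfolding altc_def by simp
    then show False using nac by blast
  qed
qed

lemma lift_altc:
  assumes ac: "altc V' E' mt cs" shows False
proof (cases "b \<in> set cs")
  case True then show False using lift_altc_b ac by blast
next
  case False
  show False
  proof (cases "b \<in> mt ` set cs")
    case True
    have "altc V' E' mt (map mt (rev cs))" using altc_rev[OF pm' ac] .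
    moreover have "b \<in> set (map mt (rev cs))" using True by simp
    ultimately show False using lift_altc_b by blast
  next
    case bn: False
    have cV': "set cs \<subseteq> V'" using ac unfolding altc_def altp_def by simp
    have ne: "cs \<noteq> []" using ac unfolding altc_def by auto
    have "successively (\<lambda>x y. E (mt x) y) cs"
    proof (rule successively_mono)
      show "successively (\<lambda>x y. E' (mt x) y) cs" using ac unfolding altc_def altp_def by simp
      fix x y assume "x \<in> set cs" "y \<in> set cs" "E' (mt x) y"
      then show "E (mt x) y" using E'_E False bn by (metis image_eqI)
    qed
    moreover have "E (mt (last cs)) (hd cs)"
    proof -
      have "mt (last cs) \<noteq> b" using bn ne by (metis image_eqI last_in_set)
      moreover have "hd cs \<noteq> b" using False ne by (metis hd_in_set)
      ultimately show ?thesis using ac E'_E unfolding altc_def by blast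
    qed
    ultimately have "altc V E mt cs" using ac cV' unfolding altc_def altp_def V'_def by auto
    then show False using nac by blast
  qed
qed

lemma lift_reach:
  assumes u: "u \<in> V'" and r: "(brg E mt u)\<^sup>*\<^sup>* x z" and xV: "x \<in> V"
  shows "(brg E' mt u)\<^sup>*\<^sup>* (rho x) (rho z)"
  using r
proof (induct rule: rtranclp_induct)
  case base then show ?case by simp
next
  case (step y z)
  have E: "E y z" "{y, z} \<noteq> {u, mt u}" using step(2) unfolding brg_def by auto
  have yV: "y \<in> V" "z \<in> V" using E pmgD[OF pm] by auto
  show ?case
  proof (cases "rho y = rho z")
    case True then show ?thesis using step(3) by simp
  next
    case ne: False
    have E': "E' (rho y) (rho z)" unfolding E'_def using rho_in yV ne E(1) by blast
    have "{rho y, rho z} \<noteq> {u, mt u}"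
    proof
      assume eq: "{rho y, rho z} = {u, mt u}"
      have uV: "u \<in> V" using u unfolding V'_def by simp
      have mmu: "mt (mt u) = u" using pmgD(8)[OF pm] uV .
      have key: "w \<in> D \<Longrightarrow> rho v = v \<Longrightarrow> {b, v} = {u, mt u} \<Longrightarrow> v = mt b" for w v
        using mmu by (auto simp: doubleton_eq_iff)
      show False
      proof (cases "y \<in> D")
        case True
        then have "z \<notin> D" using ne unfolding rho_def by auto
        then have "z = mt b" using key[OF True] eq True unfolding rho_def by simp
        then show False using noD[OF True] E(1) by simp
      next
        case yn: False
        show False
        proof (cases "z \<in> D")
          case True
          then have "y = mt b" using key[OF True, of y] eq yn unfolding rho_def by (simp add: insert_commute)
          then show False using noD[OF True] E(1) pmgD(4)[OF pm] by blast
        next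
          case False
          then show False using yn eq E(2) unfolding rho_def by simp
        qed
      qed
    qed
    then have "brg E' mt u (rho y) (rho z)" using E' unfolding brg_def by simp
    then show ?thesis using step(3) by simp
  qed
qed

end

theorem kotzig:
  assumes "pmg V E mt" "V \<noteq> {}" "\<not>(\<exists>cs. altc V E mt cs)"
  shows "\<exists>u\<in>V. \<not> (brg E mt u)\<^sup>*\<^sup>* u (mt u)"
  using assms
proof (induct "card V" arbitrary: V E rule: less_induct)
  case less
  note pm = less.prems(1)
  note nac = less.prems(3)
  let ?P = "{xs. altp V E mt xs}"
  have "?P \<subseteq> {xs. set xs \<subseteq> V \<and> length xs \<le> card V}"
  proof
    fix xs assume "xs \<in> ?P"
    then have a: "set xs \<subseteq> V" "distinct xs" unfolding altp_def by auto
    then have "length xs = card (set xs)" by (simp add: distinct_card)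
    also have "\<dots> \<le> card V" using a pmgD(1)[OF pm] by (simp add: card_mono)
    finally show "xs \<in> {xs. set xs \<subseteq> V \<and> length xs \<le> card V}" using a by simp
  qed
  then have finP: "finite ?P" using finite_lists_length_le[OF pmgD(1)[OF pm]] finite_subset by blast
  obtain v where v: "v \<in> V" using less.prems(2) by blast
  have "altp V E mt [v]" unfolding altp_def using v pmgD[OF pm] by auto
  then have Pne: "?P \<noteq> {}" by blast
  define m where "m = Max (length ` ?P)"
  have "m \<in> length ` ?P" unfolding m_def using finP Pne by simp
  then obtain p where p: "altp V E mt p" "length p = m" by auto
  have pmax: "altp V E mt q \<Longrightarrow> length q \<le> length p" for q
    using p finP unfolding m_def by simp
  have "length [v] \<le> length p" using pmax \<open>altp V E mt [v]\<close> .
  then have plen: "0 < length p" by (simp add: Suc_le_eq)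
  have pV: "set p \<subseteq> V" using altp_set[OF p(1)] .
  have p0V: "p!0 \<in> V" using pV plen by (meson nth_mem subsetD)
  show ?case
  proof (cases "\<forall>y. E (p!0) y \<longrightarrow> y = mt (p!0)")
    case True
    have "\<not> (brg E mt (p!0))\<^sup>*\<^sup>* (p!0) (mt (p!0))"
    proof
      assume "(brg E mt (p!0))\<^sup>*\<^sup>* (p!0) (mt (p!0))"
      then show False
      proof (cases rule: converse_rtranclpE)
        case base then show False using pmgD(7)[OF pm p0V] by simp
      next
        case (step y)
        then show False using True unfolding brg_def by auto
      qed
    qed
    then show ?thesis using p0V by blast
  next
    case False
    then obtain y where y: "E (p!0) y" "y \<noteq> mt (p!0)" by blast
    have yV: "y \<in> V" using y pmgD[OF pm] by blast
    have mmy: "mt (mt y) = y" using pmgD(8)[OF pm yV] .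
    have "y \<in> set p \<or> y \<in> mt ` set p"
    proof (rule ccontr)
      assume nin: "\<not> (y \<in> set p \<or> y \<in> mt ` set p)"
      have "altp V E mt (mt y # p)"
      proof -
        have "mt y \<notin> set p" using nin mmy by (metis image_eqI)
        moreover have "mt y \<notin> mt ` set p" using nin pV pmgD(8)[OF pm] mmy by (metis imageE subsetD)
        moreover have "mt y \<noteq> y" using pmgD(7)[OF pm yV] by simp
        moreover have "E (mt (mt y)) (hd p)" using mmy y pmgD(4)[OF pm] plen by (simp add: hd_conv_nth)
        ultimately show ?thesis using p(1) nin yV pmgD(6)[OF pm] mmy unfolding altp_def
          by (auto simp: successively_Cons)
      qed
      then show False using pmax[of "mt y # p"] by simp
    qed
    then show ?thesis
    proof
      assume "y \<in> mt ` set p"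
      then obtain t where t: "t < length p" "y = mt (p!t)" by (auto simp: in_set_conv_nth)
      then have t0: "t \<noteq> 0" using y by (metis)
      have "altc V E mt (take (Suc t) p)"
      proof -
        have "last (take (Suc t) p) = p!t" using t by (simp add: take_Suc_conv_app_nth)
        moreover have "hd (take (Suc t) p) = p!0" using plen by (cases p) auto
        ultimately show ?thesis unfolding altc_def using altp_take[OF p(1)] t t0 y pmgD(4)[OF pm]
          by auto
      qed
      then show ?thesis using nac by blast
    next
      assume "y \<in> set p"
      then obtain t where t: "t < length p" "y = p!t" by (auto simp: in_set_conv_nth)
      then have t0: "0 < t" using y pmgD(5)[OF pm] by (cases t) auto
      interpret bl: blossom V E mt p t
        by unfold_locales (use pm p(1) nac t t0 y in auto)
      have "\<exists>u\<in>bl.V'. \<not> (brg bl.E' mt u)\<^sup>*\<^sup>* u (mt u)"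
        using less.hyps[OF bl.card_less bl.pm'] bl.bV' bl.lift_altc by blast
      then obtain u where u: "u \<in> bl.V'" "\<not> (brg bl.E' mt u)\<^sup>*\<^sup>* u (mt u)" by blast
      have uV: "u \<in> V" using u unfolding bl.V'_def by simp
      have "\<not> (brg E mt u)\<^sup>*\<^sup>* u (mt u)"
      proof
        assume "(brg E mt u)\<^sup>*\<^sup>* u (mt u)"
        from bl.lift_reach[OF u(1) this uV] show False
          using u bl.rho_V' bl.V'_mt by simp
      qed
      then show ?thesis using uV by blast
    qed
  qed
qed




lemma log_facts: "log 2 (2::real) = 1" "log 2 (3::real) > 1"
proof -
  show "log 2 (2::real) = 1" by simp
  have "log 2 (2::real) < log 2 3" by (subst log_less_cancel_iff) auto
  then show "log 2 (3::real) > 1" by simp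
qed

lemma deg_from_split:
  fixes V :: "'b set"
  assumes IH: "\<And>V' E'. card V' < card V \<Longrightarrow> pmg V' E' mt \<Longrightarrow> \<not>(\<exists>cs. altc V' E' mt cs) \<Longrightarrow> card V' \<ge> 2
        \<Longrightarrow> \<exists>x\<in>V'. card {y. E' x y} \<le> 1 \<or> real (card {y. E' x y}) - 1 < log 2 (real (card V') / 2)"
    and pm: "pmg V E mt" and nac: "\<not>(\<exists>cs. altc V E mt cs)"
    and SV: "S \<subseteq> V" and sV: "s \<in> V" and sS: "s \<notin> S" "mt s \<notin> S"
    and Smt: "\<And>x. x \<in> S \<Longrightarrow> mt x \<in> S"
    and Snb: "\<And>x y. x \<in> S \<Longrightarrow> E x y \<Longrightarrow> y \<in> S \<or> y = s"
    and snb: "\<And>y. E s y \<Longrightarrow> y \<in> S \<or> y = mt s"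
    and sz: "2 * card S + 2 \<le> card V"
  shows "\<exists>x\<in>V. card {y. E x y} \<le> 1 \<or> real (card {y. E x y}) - 1 < log 2 (real (card V) / 2)"
proof (cases "S = {}")
  case True
  have "{y. E s y} \<subseteq> {mt s}" using snb True by auto
  then have "card {y. E s y} \<le> 1" using card_mono[of "{mt s}"] by fastforce
  then show ?thesis using sV by blast
next
  case False
  define ES where "ES x y = (E x y \<and> x \<in> S \<and> y \<in> S)" for x y
  have finV: "finite V" using pmgD(1)[OF pm] .
  have finS: "finite S" using SV finV finite_subset by blast
  have pmS: "pmg S ES mt" unfolding pmg_def
  proof (intro conjI allI impI ballI)
    show "finite S" by (rule finS)
    fix x y assume "ES x y" then show "x \<in> S" "y \<in> S" "ES y x" "x \<noteq> y"
      unfolding ES_def using pmgD[OF pm] by auto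
  next
    fix x assume x: "x \<in> S"
    then have xV: "x \<in> V" using SV by auto
    show "mt x \<in> S" using Smt x .
    show "mt x \<noteq> x" "mt (mt x) = x" using pmgD[OF pm] xV by auto
    show "ES x (mt x)" unfolding ES_def using pmgD(9)[OF pm xV] x Smt[OF x] by simp
  qed
  have nacS: "\<not>(\<exists>cs. altc S ES mt cs)"
  proof
    assume "\<exists>cs. altc S ES mt cs"
    then obtain cs where cs: "altc S ES mt cs" by blast
    have sc: "successively (\<lambda>x y. ES (mt x) y) cs" using cs unfolding altc_def altp_def by simp
    have "successively (\<lambda>x y. E (mt x) y) cs"
      by (rule successively_mono[OF sc]) (simp add: ES_def)
    moreover have "set cs \<subseteq> V" using cs SV unfolding altc_def altp_def by (meson order_trans)
    moreover have "E (mt (last cs)) (hd cs)" using cs unfolding altc_def ES_def by simp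
    ultimately have "altc V E mt cs" using cs unfolding altc_def altp_def by simp
    then show False using nac by blast
  qed
  obtain z where z: "z \<in> S" using False by blast
  have "{z, mt z} \<subseteq> S" using z Smt by auto
  moreover have "z \<noteq> mt z" using pmgD(7)[OF pm, of z] z SV by auto
  ultimately have cS2: "card S \<ge> 2" using card_mono[OF finS, of "{z, mt z}"] by simp
  have cSV: "card S < card V" using sz by simp
  obtain x where x: "x \<in> S" "card {y. ES x y} \<le> 1 \<or> real (card {y. ES x y}) - 1 < log 2 (real (card S) / 2)"
    using IH[OF cSV pmS nacS cS2] by blast
  have "{y. E x y} \<subseteq> insert s {y. ES x y}" using Snb x(1) unfolding ES_def by auto
  moreover have "finite {y. ES x y}" using finS unfolding ES_def by (simp add: finite_subset subset_iff)
  ultimately have dle: "card {y. E x y} \<le> card {y. ES x y} + 1"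
    by (metis card_insert_le_m1 card_mono finite_insert card_insert_if Suc_eq_plus1 le_SucI insert_absorb)
  have n6: "real (card V) \<ge> 2 * real (card S) + 2" using sz by linarith
  have kpos: "real (card S) \<ge> 2" using cS2 by simp
  have "real (card {y. E x y}) - 1 < log 2 (real (card V) / 2)"
    using x(2)
  proof
    assume "card {y. ES x y} \<le> 1"
    then have "real (card {y. E x y}) - 1 \<le> 1" using dle by simp
    also have "1 < log 2 3" using log_facts by simp
    also have "log 2 3 \<le> log 2 (real (card V) / 2)" using n6 kpos by (subst log_le_cancel_iff) auto
    finally show ?thesis .
  next
    assume a: "real (card {y. ES x y}) - 1 < log 2 (real (card S) / 2)"
    have "log 2 (real (card S) / 2) = log 2 (real (card S)) - 1" using kpos by (simp add: log_divide)
    then have "real (card {y. E x y}) - 1 < log 2 (real (card S))" using a dle by simp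
    also have "log 2 (real (card S)) < log 2 (real (card V) / 2)" using n6 kpos by (subst log_less_cancel_iff) auto
    finally show ?thesis .
  qed
  then show ?thesis using x(1) SV by blast
qed

lemma deglem:
  fixes V :: "'b set"
  assumes "pmg V E mt" "\<not>(\<exists>cs. altc V E mt cs)" "card V \<ge> 2"
  shows "\<exists>x\<in>V. card {y. E x y} \<le> 1 \<or> real (card {y. E x y}) - 1 < log 2 (real (card V) / 2)"
  using assms
proof (induct "card V" arbitrary: V E rule: less_induct)
  case less
  note pm = less.prems(1) and nac = less.prems(2)
  have finV: "finite V" using pmgD(1)[OF pm] .
  have "V \<noteq> {}" using less.prems(3) by auto
  from kotzig[OF pm this nac] obtain u where u: "u \<in> V" "\<not> (brg E mt u)\<^sup>*\<^sup>* u (mt u)" by blast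
  define A where "A = {x. (brg E mt u)\<^sup>*\<^sup>* u x}"
  have uA: "u \<in> A" unfolding A_def by simp
  have muA: "mt u \<notin> A" using u unfolding A_def by simp
  have muV: "mt u \<in> V" "mt (mt u) = u" "mt u \<noteq> u" using pmgD[OF pm] u by auto
  have AV: "A \<subseteq> V"
  proof
    fix x assume "x \<in> A"
    then have "(brg E mt u)\<^sup>*\<^sup>* u x" unfolding A_def by simp
    then show "x \<in> V" by (induct rule: rtranclp_induct) (use u pmgD[OF pm] in \<open>auto simp: brg_def\<close>)
  qed
  have stepA: "x \<in> A \<Longrightarrow> E x y \<Longrightarrow> {x, y} \<noteq> {u, mt u} \<Longrightarrow> y \<in> A" for x y
    unfolding A_def brg_def by (simp add: rtranclp.rtrancl_into_rtrancl)
  have dbl: "{x, y} \<noteq> {u, mt u}" if "x \<noteq> u" "x \<noteq> mt u" for x y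
    using that by (auto simp: doubleton_eq_iff)
  define S1 where "S1 = A - {u}"
  define S2 where "S2 = V - A - {mt u}"
  have S1nb: "y \<in> S1 \<or> y = u" if "x \<in> S1" "E x y" for x y
    using that stepA dbl muA unfolding S1_def by blast
  have unb: "y \<in> S1 \<or> y = mt u" if "E u y" for y
  proof (cases "y = mt u")
    case False
    then have "{u, y} \<noteq> {u, mt u}" by (auto simp: doubleton_eq_iff)
    then have "y \<in> A" using stepA uA that by blast
    moreover have "y \<noteq> u" using that pmgD(5)[OF pm] by blast
    ultimately show ?thesis unfolding S1_def by blast
  qed simp
  have S1mt: "mt x \<in> S1" if "x \<in> S1" for x
  proof -
    have xV: "x \<in> V" using that AV unfolding S1_def by auto
    have "mt x \<in> S1 \<or> mt x = u" using S1nb[OF that pmgD(9)[OF pm xV]] .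
    moreover have "mt x \<noteq> u" using that muA pmgD(8)[OF pm xV] unfolding S1_def by auto
    ultimately show ?thesis by blast
  qed
  have S2mt: "mt x \<in> S2" if "x \<in> S2" for x
  proof -
    have xV: "x \<in> V" using that unfolding S2_def by auto
    have mm: "mt (mt x) = x" using pmgD(8)[OF pm xV] .
    have "mt x \<notin> A"
    proof
      assume a: "mt x \<in> A"
      show False
      proof (cases "mt x = u")
        case True then have "x = mt u" using mm by auto
        then show False using that unfolding S2_def by simp
      next
        case False
        then have "mt x \<in> S1" using a unfolding S1_def by simp
        then have "x \<in> S1" using S1mt mm by metis
        then show False using that unfolding S1_def S2_def by simp
      qed
    qed
    moreover have "mt x \<noteq> mt u" using that uA muV mm unfolding S2_def by (metis Diff_iff)
    ultimately show ?thesis using pmgD(6)[OF pm xV] unfolding S2_def by simp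
  qed
  have S2nb: "y \<in> S2 \<or> y = mt u" if "x \<in> S2" "E x y" for x y
  proof -
    have yV: "y \<in> V" using that pmgD(3)[OF pm] by blast
    have Eyx: "E y x" using that pmgD(4)[OF pm] by blast
    have "y \<notin> A"
    proof
      assume "y \<in> A"
      show False
      proof (cases "y = u")
        case True
        then have "x \<in> S1 \<or> x = mt u" using unb Eyx by simp
        then show False using that unfolding S1_def S2_def by auto
      next
        case False
        then have "y \<in> S1" using \<open>y \<in> A\<close> unfolding S1_def by simp
        then have "x \<in> S1 \<or> x = u" using S1nb Eyx by blast
        then show False using that uA unfolding S1_def S2_def by auto
      qed
    qed
    then show ?thesis using yV unfolding S2_def by auto
  qed
  have munb: "y \<in> S2 \<or> y = u" if "E (mt u) y" for y
  proof -
    have yV: "y \<in> V" using that pmgD(3)[OF pm] by blast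
    have Eyx: "E y (mt u)" using that pmgD(4)[OF pm] by blast
    have "y \<noteq> mt u" using that pmgD(5)[OF pm] by blast
    moreover have "y \<notin> S1"
    proof
      assume "y \<in> S1"
      then have "mt u \<in> S1 \<or> mt u = u" using S1nb Eyx by blast
      then show False using muA muV unfolding S1_def by auto
    qed
    ultimately show ?thesis using yV unfolding S1_def S2_def by auto
  qed
  have finA: "finite A" using AV finV finite_subset by blast
  have cA: "card A + card (V - A) = card V" using card_Diff_subset[OF finA AV] card_mono[OF finV AV] by simp
  have "card A > 0" using finA uA card_gt_0_iff by blast
  then have cS1: "card S1 + 1 = card A" unfolding S1_def using card_Diff_singleton[OF uA] by simp
  have mVA: "mt u \<in> V - A" using muV muA by simp
  have "card (V - A) > 0" using finV mVA card_gt_0_iff by blast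
  then have cS2: "card S2 + 1 = card (V - A)" unfolding S2_def using card_Diff_singleton[OF mVA]
    by (simp add: set_diff_eq)
  have IH: "\<And>V' E'. card V' < card V \<Longrightarrow> pmg V' E' mt \<Longrightarrow> \<not>(\<exists>cs. altc V' E' mt cs) \<Longrightarrow> card V' \<ge> 2
        \<Longrightarrow> \<exists>x\<in>V'. card {y. E' x y} \<le> 1 \<or> real (card {y. E' x y}) - 1 < log 2 (real (card V') / 2)"
    using less.hyps by blast
  show ?case
  proof (cases "2 * card S1 + 2 \<le> card V")
    case True
    show ?thesis
      by (rule deg_from_split[OF IH pm nac _ u(1) _ _ S1mt S1nb unb True])
         (use AV muA uA in \<open>auto simp: S1_def\<close>)
  next
    case False
    then have sz: "2 * card S2 + 2 \<le> card V" using cA cS1 cS2 by linarith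
    show ?thesis
      by (rule deg_from_split[OF IH pm nac _ muV(1) _ _ S2mt S2nb _ sz])
         (use muV uA munb in \<open>auto simp: S2_def\<close>)
  qed
qed




fun oth :: "colour \<Rightarrow> colour" where "oth Red = Blue" | "oth Blue = Red"

lemma oth_ne: "oth c \<noteq> c" by (cases c) auto
lemma oth_oth: "oth (oth c) = c" by (cases c) auto
lemma col_two: "d = c \<or> d = oth c" by (cases c; cases d) auto
lemma UNIV_colour: "(UNIV :: colour set) = {Red, Blue}" using colour.exhaust by auto
lemma card_UNIV_colour: "card (UNIV :: colour set) = 2" unfolding UNIV_colour by simp

definition EG :: "'a set \<Rightarrow> ('a \<Rightarrow> 'a \<Rightarrow> colour option) \<Rightarrow> 'a \<times> colour \<Rightarrow> 'a \<times> colour \<Rightarrow> bool" where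
  "EG W col x y \<longleftrightarrow> fst x \<in> W \<and> fst y \<in> W \<and>
     ((fst x = fst y \<and> snd x \<noteq> snd y) \<or> (snd x = snd y \<and> col (fst x) (fst y) = Some (snd x)))"

definition mtG :: "'a \<times> colour \<Rightarrow> 'a \<times> colour" where "mtG x = (fst x, oth (snd x))"

lemma pmgG:
  assumes g: "two_edge_coloured_graph W col"
  shows "pmg (W \<times> UNIV) (EG W col) mtG"
proof -
  have fin: "finite W" and sym: "\<And>u v. col u v = col v u" and irr: "\<And>v. col v v = None"
    using g unfolding two_edge_coloured_graph_def by auto
  show ?thesis unfolding pmg_def
  proof (intro conjI allI impI ballI)
    show "finite (W \<times> (UNIV :: colour set))" using fin by (simp add: UNIV_colour)
    fix x y assume e: "EG W col x y"
    then show "x \<in> W \<times> UNIV" "y \<in> W \<times> UNIV" unfolding EG_def by (auto simp: mem_Times_iff)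
    show "EG W col y x" using e sym unfolding EG_def by auto
    show "x \<noteq> y" using e irr unfolding EG_def by auto
  next
    fix x :: "'a \<times> colour" assume x: "x \<in> W \<times> UNIV"
    show "mtG x \<in> W \<times> UNIV" "mtG x \<noteq> x" "mtG (mtG x) = x" "EG W col x (mtG x)"
      using x oth_ne[of "snd x"] oth_oth unfolding mtG_def EG_def by (auto simp: mem_Times_iff prod_eq_iff)
  qed
qed

lemma altc_to_col:
  assumes g: "two_edge_coloured_graph W col" and ac: "altc (W \<times> UNIV) (EG W col) mtG cs"
  shows "alternating_cycle col (map fst cs)"
proof -
  have sym: "\<And>u v. col u v = col v u" using g unfolding two_edge_coloured_graph_def by auto
  define k where "k = length cs"
  have k2: "k \<ge> 2" using ac unfolding altc_def k_def by simp
  have ap: "altp (W \<times> UNIV) (EG W col) mtG cs" using ac unfolding altc_def by simp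
  have F1: "EG W col (mtG (cs!i)) (cs!((i+1) mod k))" if i: "i < k" for i
  proof (cases "Suc i < k")
    case True
    then show ?thesis using altp_edge[OF ap, of i] k_def by simp
  next
    case False
    then have "i = k - 1" using i by simp
    moreover have "cs \<noteq> []" using k2 k_def by auto
    then have "last cs = cs!(k-1)" "hd cs = cs!0" using k_def
      by (simp_all add: last_conv_nth hd_conv_nth)
    moreover have "(k - 1 + 1) mod k = 0" using k2 by simp
    ultimately show ?thesis using ac unfolding altc_def by simp
  qed
  have F2: "fst (cs!i) \<noteq> fst (cs!l)" if "i < k" "l < k" "i \<noteq> l" for i l
  proof
    assume eq: "fst (cs!i) = fst (cs!l)"
    have "snd (cs!l) = snd (cs!i) \<or> snd (cs!l) = oth (snd (cs!i))" using col_two .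
    then show False
    proof
      assume "snd (cs!l) = snd (cs!i)"
      then have "cs!l = cs!i" using eq by (simp add: prod_eq_iff)
      then show False using altp_nth_inj[OF ap, of i l] that k_def by simp
    next
      assume "snd (cs!l) = oth (snd (cs!i))"
      then have "cs!l = mtG (cs!i)" using eq unfolding mtG_def by (simp add: prod_eq_iff)
      then show False using altp_nth_mt[OF ap, of l i] that k_def by simp
    qed
  qed
  have F4: "snd (cs!((i+1) mod k)) = oth (snd (cs!i)) \<and>
      col (fst (cs!i)) (fst (cs!((i+1) mod k))) = Some (snd (cs!((i+1) mod k)))" if i: "i < k" for i
  proof -
    have jk: "(i+1) mod k < k" using k2 by simp
    have "(i+1) mod k \<noteq> i"
    proof (cases "Suc i < k")
      case True then show ?thesis by simp
    next
      case False then have "i = k - 1" using i by simp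
      then show ?thesis using k2 by simp
    qed
    then have "fst (cs!i) \<noteq> fst (cs!((i+1) mod k))" using F2 i jk by metis
    then show ?thesis using F1[OF i] unfolding EG_def mtG_def by auto
  qed
  let ?vs = "map fst cs"
  have len: "length ?vs = k" unfolding k_def by simp
  have nth: "i < k \<Longrightarrow> ?vs!i = fst (cs!i)" for i unfolding k_def by simp
  have k3: "k \<ge> 3"
  proof (rule ccontr)
    assume "\<not> k \<ge> 3"
    then have k: "k = 2" using k2 by simp
    have a: "snd (cs!1) = oth (snd (cs!0))" "col (fst (cs!0)) (fst (cs!1)) = Some (snd (cs!1))"
      using F4[of 0] k by auto
    have b: "col (fst (cs!1)) (fst (cs!0)) = Some (snd (cs!0))" using F4[of 1] k by auto
    have "Some (snd (cs!1)) = Some (snd (cs!0))" using a(2) b sym by metis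
    then show False using a(1) oth_ne by (metis option.inject)
  qed
  have dist: "distinct ?vs"
    unfolding distinct_conv_nth using F2 len nth by auto
  have e1: "col (?vs!i) (?vs!((i+1) mod k)) \<noteq> None" if "i < k" for i
    using F4[OF that] nth[OF that] nth[of "(i+1) mod k"] k2 by simp
  have e2: "col (?vs!i) (?vs!((i+1) mod k)) \<noteq> col (?vs!((i+1) mod k)) (?vs!((i+2) mod k))" if i: "i < k" for i
  proof -
    define j where "j = (i+1) mod k"
    have jk: "j < k" using k2 unfolding j_def by simp
    have jj: "(j+1) mod k = (i+2) mod k" unfolding j_def by (simp add: mod_Suc_eq)
    have "col (?vs!i) (?vs!j) = Some (snd (cs!j))" using F4[OF i] nth[OF i] nth[OF jk] unfolding j_def by simp
    moreover have "col (?vs!j) (?vs!((i+2) mod k)) = Some (oth (snd (cs!j)))"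
      using F4[OF jk] nth[OF jk] nth[of "(j+1) mod k"] k2 jj by simp
    ultimately show ?thesis using oth_ne j_def by (metis option.inject)
  qed
  show ?thesis unfolding alternating_cycle_def Let_def len using k3 dist e1 e2 by blast
qed

lemma coldeg:
  assumes g: "two_edge_coloured_graph W col" and n2: "card W \<ge> 2"
    and nac: "\<not> (\<exists>cs. alternating_cycle col cs)"
  shows "\<exists>v\<in>W. \<exists>c. real (card {u. col v u = Some c}) < log 2 (real (card W))"
proof -
  have fin: "finite W" and inW: "\<And>u v. col u v \<noteq> None \<Longrightarrow> u \<in> W \<and> v \<in> W"
    using g unfolding two_edge_coloured_graph_def by blast+
  have nacG: "\<not> (\<exists>cs. altc (W \<times> UNIV) (EG W col) mtG cs)" using altc_to_col[OF g] nac by blast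
  have cV: "card (W \<times> (UNIV :: colour set)) = 2 * card W"
    by (simp add: card_cartesian_product card_UNIV_colour)
  then have cV2: "card (W \<times> (UNIV :: colour set)) \<ge> 2" using n2 by simp
  obtain x where x: "x \<in> W \<times> UNIV" and
    P: "card {y. EG W col x y} \<le> 1 \<or> real (card {y. EG W col x y}) - 1 < log 2 (real (card (W \<times> (UNIV :: colour set))) / 2)"
    using deglem[OF pmgG[OF g] nacG cV2] by blast
  obtain v c where vc: "x = (v, c)" by (cases x)
  have vW: "v \<in> W" using x vc by auto
  have fN: "finite {u. col v u = Some c}" using inW fin by (metis (mono_tags, lifting) finite_subset mem_Collect_eq option.distinct(1) subsetI)
  have seteq: "{y. EG W col x y} = insert (v, oth c) ((\<lambda>u. (u, c)) ` {u. col v u = Some c})"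
  proof (rule set_eqI)
    fix y :: "'a \<times> colour"
    obtain w d where y: "y = (w, d)" by (cases y)
    show "y \<in> {y. EG W col x y} \<longleftrightarrow> y \<in> insert (v, oth c) ((\<lambda>u. (u, c)) ` {u. col v u = Some c})"
      unfolding y vc EG_def using vW inW col_two[of d c] oth_ne[of c] by auto
  qed
  have nin: "(v, oth c) \<notin> (\<lambda>u. (u, c)) ` {u. col v u = Some c}" using oth_ne by auto
  have cd: "card {y. EG W col x y} = card {u. col v u = Some c} + 1"
    unfolding seteq using nin fN by (simp add: card_image inj_on_def)
  have lg: "log 2 (real (card W)) \<ge> 1"
  proof -
    have "log 2 2 \<le> log 2 (real (card W))" using n2 by (subst log_le_cancel_iff) auto
    then show ?thesis by simp
  qed
  have "real (card {u. col v u = Some c}) < log 2 (real (card W))"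
    using P
  proof
    assume "card {y. EG W col x y} \<le> 1"
    then have "card {u. col v u = Some c} = 0" using cd by simp
    then show ?thesis using lg by simp
  next
    assume "real (card {y. EG W col x y}) - 1 < log 2 (real (card (W \<times> (UNIV :: colour set))) / 2)"
    then show ?thesis using cd cV by simp
  qed
  then show ?thesis using vW by blast
qed




lemma altcyc_mono:
  assumes ac: "alternating_cycle colW cs" and h: "\<And>x y. colW x y \<noteq> None \<Longrightarrow> colW x y = col x y"
  shows "alternating_cycle col cs"
proof -
  define k where "k = length cs"
  have k3: "k \<ge> 3" and dist: "distinct cs"
    and e: "\<forall>i<k. colW (cs!i) (cs!((i+1) mod k)) \<noteq> None"
    and a: "\<forall>i<k. colW (cs!i) (cs!((i+1) mod k)) \<noteq> colW (cs!((i+1) mod k)) (cs!((i+2) mod k))"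
    using ac unfolding alternating_cycle_def Let_def k_def by auto
  have e2: "col (cs!i) (cs!((i+1) mod k)) = colW (cs!i) (cs!((i+1) mod k))" if "i < k" for i
    using h e that by metis
  have e3: "col (cs!((i+1) mod k)) (cs!((i+2) mod k)) = colW (cs!((i+1) mod k)) (cs!((i+2) mod k))" if "i < k" for i
  proof -
    have j: "(i+1) mod k < k" using k3 by simp
    have "((i+1) mod k + 1) mod k = (i+2) mod k" by (simp add: mod_Suc_eq)
    then show ?thesis using e2[OF j] by simp
  qed
  show ?thesis unfolding alternating_cycle_def Let_def k_def[symmetric]
    using k3 dist e a e2 e3 by simp
qed

lemma restrict_graph:
  assumes g: "two_edge_coloured_graph V col" and WV: "W \<subseteq> V"
    and nac: "\<not> (\<exists>cs. alternating_cycle col cs)"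
  shows "two_edge_coloured_graph W (\<lambda>x y. if x \<in> W \<and> y \<in> W then col x y else None)"
    "\<not> (\<exists>cs. alternating_cycle (\<lambda>x y. if x \<in> W \<and> y \<in> W then col x y else None) cs)"
proof -
  have fin: "finite V" and sym: "\<And>u v. col u v = col v u" and irr: "\<And>v. col v v = None"
    using g unfolding two_edge_coloured_graph_def by blast+
  show "two_edge_coloured_graph W (\<lambda>x y. if x \<in> W \<and> y \<in> W then col x y else None)"
    unfolding two_edge_coloured_graph_def
  proof (intro conjI allI impI)
    show "finite W" using fin WV by (rule rev_finite_subset)
  next
    fix u v show "(if u \<in> W \<and> v \<in> W then col u v else None) = (if v \<in> W \<and> u \<in> W then col v u else None)"
      using sym by auto
  next
    fix v show "(if v \<in> W \<and> v \<in> W then col v v else None) = None" using irr by simp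
  next
    fix u v assume "(if u \<in> W \<and> v \<in> W then col u v else None) \<noteq> None"
    then show "u \<in> W" "v \<in> W" by (meson option.discI)+
  qed
  show "\<not> (\<exists>cs. alternating_cycle (\<lambda>x y. if x \<in> W \<and> y \<in> W then col x y else None) cs)"
  proof
    assume "\<exists>cs. alternating_cycle (\<lambda>x y. if x \<in> W \<and> y \<in> W then col x y else None) cs"
    then obtain cs where cs: "alternating_cycle (\<lambda>x y. if x \<in> W \<and> y \<in> W then col x y else None) cs" by blast
    have "alternating_cycle col cs"
    proof (rule altcyc_mono[OF cs])
      fix x y show "(if x \<in> W \<and> y \<in> W then col x y else None) \<noteq> None \<Longrightarrow>
         (if x \<in> W \<and> y \<in> W then col x y else None) = col x y"
        by (cases "x \<in> W \<and> y \<in> W") auto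
    qed
    then show False using nac by blast
  qed
qed

lemma greedy:
  assumes g: "two_edge_coloured_graph V col" and nac: "\<not> (\<exists>cs. alternating_cycle col cs)"
    and n2: "card V \<ge> 2"
  shows "W \<subseteq> V \<Longrightarrow> card W = n \<Longrightarrow> \<exists>vs. distinct vs \<and> set vs = W \<and>
           (\<forall>i < length vs. \<exists>c :: colour.
              real (card {j. i < j \<and> j < length vs \<and> col (vs!i) (vs!j) = Some c})
                < log 2 (real (card V)))"
proof (induct n arbitrary: W)
  case 0
  have fin: "finite V" using g unfolding two_edge_coloured_graph_def by blast
  then have "finite W" using 0 finite_subset by blast
  then have "W = {}" using 0 by simp
  then show ?case by (intro exI[of _ "[]"]) simp
next
  case (Suc n)
  have fin: "finite V" and irr: "\<And>v. col v v = None" using g unfolding two_edge_coloured_graph_def by blast+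
  have finW: "finite W" by (rule rev_finite_subset[OF fin Suc.prems(1)])
  have lg: "log 2 (real (card V)) \<ge> 1"
  proof -
    have "log 2 2 \<le> log 2 (real (card V))" using n2 by (subst log_le_cancel_iff) auto
    then show ?thesis by simp
  qed
  have cWV: "card W \<le> card V" using card_mono[OF fin Suc.prems(1)] .
  have "\<exists>v\<in>W. \<exists>c. real (card {u. u \<in> W \<and> col v u = Some c}) < log 2 (real (card V))"
  proof (cases "card W \<ge> 2")
    case True
    have "\<exists>v\<in>W. \<exists>c. real (card {u. (if v \<in> W \<and> u \<in> W then col v u else None) = Some c}) < log 2 (real (card W))"
      using coldeg[OF restrict_graph(1)[OF g Suc.prems(1) nac] True restrict_graph(2)[OF g Suc.prems(1) nac]] .
    then obtain v c where v: "v \<in> W" "real (card {u. (if v \<in> W \<and> u \<in> W then col v u else None) = Some c}) < log 2 (real (card W))"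
      by blast
    have "{u. (if v \<in> W \<and> u \<in> W then col v u else None) = Some c} = {u. u \<in> W \<and> col v u = Some c}"
      using v(1) by auto
    moreover have "log 2 (real (card W)) \<le> log 2 (real (card V))" using cWV True
      by (subst log_le_cancel_iff) auto
    ultimately have "real (card {u. u \<in> W \<and> col v u = Some c}) < log 2 (real (card V))" using v(2) by simp
    then show ?thesis using v(1) by blast
  next
    case False
    then have "card W = 1" using Suc.prems(2) by simp
    then obtain v where "W = {v}" by (rule card_1_singletonE)
    then have "{u. u \<in> W \<and> col v u = Some Red} = {}" using irr by auto
    then have "card {u. u \<in> W \<and> col v u = Some Red} = 0" by (simp only: card.empty)
    then have "real (card {u. u \<in> W \<and> col v u = Some Red}) < log 2 (real (card V))"
      using lg by simp
    moreover have "v \<in> W" using \<open>W = {v}\<close> by simp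
    ultimately show ?thesis by blast
  qed
  then obtain v c where v: "v \<in> W" "real (card {u. u \<in> W \<and> col v u = Some c}) < log 2 (real (card V))"
    by blast
  have cW': "card (W - {v}) = n" using Suc.prems v(1) by simp
  obtain vs where vs: "distinct vs" "set vs = W - {v}"
    "\<forall>i < length vs. \<exists>c :: colour. real (card {j. i < j \<and> j < length vs \<and> col (vs!i) (vs!j) = Some c})
                < log 2 (real (card V))"
    using Suc.hyps[OF _ cW'] Suc.prems(1) by blast
  let ?ws = "v # vs"
  have d: "distinct ?ws" "set ?ws = W" using vs v by auto
  have "\<forall>i < length ?ws. \<exists>c :: colour. real (card {j. i < j \<and> j < length ?ws \<and> col (?ws!i) (?ws!j) = Some c})
                < log 2 (real (card V))"
  proof (intro allI impI)
    fix i assume i: "i < length ?ws"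
    show "\<exists>c :: colour. real (card {j. i < j \<and> j < length ?ws \<and> col (?ws!i) (?ws!j) = Some c}) < log 2 (real (card V))"
    proof (cases i)
      case 0
      let ?J = "{j. 0 < j \<and> j < length ?ws \<and> col v (?ws!j) = Some c}"
      have "card ?J \<le> card {u. u \<in> W \<and> col v u = Some c}"
      proof (rule card_inj_on_le)
        show "inj_on (\<lambda>j. ?ws!j) ?J" using d(1) by (auto simp: inj_on_def nth_eq_iff_index_eq)
        show "(\<lambda>j. ?ws!j) ` ?J \<subseteq> {u. u \<in> W \<and> col v u = Some c}" using d(2) by (auto dest: nth_mem)
        show "finite {u. u \<in> W \<and> col v u = Some c}" using finW by simp
      qed
      then show ?thesis using v(2) 0 by (intro exI[of _ c]) simp
    next
      case (Suc i')
      then have i': "i' < length vs" using i by simp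
      obtain c' where c': "real (card {j. i' < j \<and> j < length vs \<and> col (vs!i') (vs!j) = Some c'}) < log 2 (real (card V))"
        using vs(3) i' by blast
      have "{j. i < j \<and> j < length ?ws \<and> col (?ws!i) (?ws!j) = Some c'} =
            Suc ` {j. i' < j \<and> j < length vs \<and> col (vs!i') (vs!j) = Some c'}"
        unfolding Suc
      proof (rule set_eqI)
        fix j
        show "j \<in> {j. Suc i' < j \<and> j < length ?ws \<and> col (?ws!Suc i') (?ws!j) = Some c'} \<longleftrightarrow>
            j \<in> Suc ` {j. i' < j \<and> j < length vs \<and> col (vs!i') (vs!j) = Some c'}"
          by (cases j) auto
      qed
      then have "card {j. i < j \<and> j < length ?ws \<and> col (?ws!i) (?ws!j) = Some c'} =
            card {j. i' < j \<and> j < length vs \<and> col (vs!i') (vs!j) = Some c'}"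
        by (simp add: card_image)
      then show ?thesis using c' by (intro exI[of _ c']) simp
    qed
  qed
  then show ?case using d by blast
qed

theorem mainTheorem3:
  fixes V :: "'a set" and col :: "'a \<Rightarrow> 'a \<Rightarrow> colour option"
  assumes "two_edge_coloured_graph V col"
    and "card V \<ge> 2"
    and "\<not> (\<exists>cs. alternating_cycle col cs)"
  shows "\<exists>vs. distinct vs \<and> set vs = V \<and>
           (\<forall>i < length vs. \<exists>c :: colour.
              real (card {j. i < j \<and> j < length vs \<and> col (vs!i) (vs!j) = Some c})
                < log 2 (real (card V)))"
  using greedy[OF assms(1) assms(3) assms(2), of V "card V"] by simp


end
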